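(* Let $d\ge1$, $M>0$, and suppose $\mu_K=\mathbf{0}\in\mathbb{R}^d$ and $\mu_H=\mathbf{1}\in\mathbb{R}^d$. Let $C_M=[-M,M]^{2d+2}$, in which the parameter vector $(\beta_K,\beta_H,\alpha_K,\alpha_H)\in\mathbb{R}^d\times\mathbb{R}^d\times\mathbb{R}\times\mathbb{R}$ ranges. Let $I_2\sim\text{Irwin–Hall}(2)$ and $J_{2d}\sim\text{Irwin–Hall}(2d)$ be independent. Then the fraction (by Lebesgue volume) of $C_M$ on which the unexplained components $U^{(H)}=\mu_K^\top\Delta\beta+\Delta\alpha$ and $U^{(K)}=\mu_H^\top\Delta\beta+\Delta\alpha$ have strictly opposite signs equals $$P_d:=\Pr\big(\{I_2>1\}\cap\{J_{2d}<d+1-I_2\}\big)+\Pr\big(\{I_2<1\}\cap\{J_{2d}>d+1-I_2\}\big),$$ which is independent of $M$. Moreover $P_d\to 1/2$ as $d\to\infty$.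
   Context: Oaxaca–Blinder setting: two groups $H,K$ with $\mathbb{E}_g[Y\mid X]=\alpha_g+X^\top\beta_g$, $\mu_g=\mathbb{E}_g[X]$, $\Delta\beta=\beta_H-\beta_K$, $\Delta\alpha=\alpha_H-\alpha_K$. The Irwin–Hall$(n)$ distribution is the law of the sum of $n$ independent Uniform$(0,1)$ random variables. *)

theory Defs
  imports "HOL-Probability.Probability"
begin

definition irwin_hall :: "nat \<Rightarrow> real measure" where
  "irwin_hall n = distr (PiM {..<n} (\<lambda>_. uniform_measure lborel {0..1::real})) borel
                        (\<lambda>u. \<Sum>i<n. u i)"

definition lebesgue_R :: "nat \<Rightarrow> (nat \<Rightarrow> real) measure" where
  "lebesgue_R n = PiM {..<n} (\<lambda>_. lborel)"

definition betaK :: "nat \<Rightarrow> (nat \<Rightarrow> real) \<Rightarrow> nat \<Rightarrow> real" where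
  "betaK d x i = x i"
definition betaH :: "nat \<Rightarrow> (nat \<Rightarrow> real) \<Rightarrow> nat \<Rightarrow> real" where
  "betaH d x i = x (d + i)"
definition alphaK :: "nat \<Rightarrow> (nat \<Rightarrow> real) \<Rightarrow> real" where
  "alphaK d x = x (2 * d)"
definition alphaH :: "nat \<Rightarrow> (nat \<Rightarrow> real) \<Rightarrow> real" where
  "alphaH d x = x (2 * d + 1)"

definition muK :: "nat \<Rightarrow> real" where "muK i = 0"
definition muH :: "nat \<Rightarrow> real" where "muH i = 1"

definition U_H :: "nat \<Rightarrow> (nat \<Rightarrow> real) \<Rightarrow> real" where
  "U_H d x = (\<Sum>i<d. muK i * (betaH d x i - betaK d x i)) + (alphaH d x - alphaK d x)"
definition U_K :: "nat \<Rightarrow> (nat \<Rightarrow> real) \<Rightarrow> real" where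
  "U_K d x = (\<Sum>i<d. muH i * (betaH d x i - betaK d x i)) + (alphaH d x - alphaK d x)"

definition cube_CM :: "nat \<Rightarrow> real \<Rightarrow> (nat \<Rightarrow> real) set" where
  "cube_CM d M = PiE {..<2 * d + 2} (\<lambda>_. {-M..M})"

definition opposite_sign_set :: "nat \<Rightarrow> real \<Rightarrow> (nat \<Rightarrow> real) set" where
  "opposite_sign_set d M = {x \<in> cube_CM d M.
      (U_H d x < 0 \<and> U_K d x > 0) \<or> (U_H d x > 0 \<and> U_K d x < 0)}"

definition P_d :: "nat \<Rightarrow> real" where
  "P_d d = measure (irwin_hall 2 \<Otimes>\<^sub>M irwin_hall (2 * d))
              {p. fst p > 1 \<and> snd p < real d + 1 - fst p}
         + measure (irwin_hall 2 \<Otimes>\<^sub>M irwin_hall (2 * d))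
              {p. fst p < 1 \<and> snd p > real d + 1 - fst p}"

end

theory Submission
  imports Defs
begin


abbreviation U01 :: "real measure" where "U01 \<equiv> uniform_measure lborel {0..1::real}"

lemma prob_U: "a < b \<Longrightarrow> prob_space (uniform_measure lborel {a..b::real})"
  by (intro prob_space_uniform_measure) auto

lemma lborel_affine_preimage:
  fixes p q :: real assumes q: "q \<noteq> 0" and S[measurable]: "S \<in> sets borel"
  shows "emeasure lborel S = ennreal \<bar>q\<bar> * emeasure lborel ((\<lambda>x. p + q*x) -` S)"
proof -
  have eq: "lborel = density (distr lborel borel (\<lambda>x. p + q * x)) (\<lambda>_. ennreal \<bar>q\<bar>)"
    by (rule lborel_real_affine[OF q])
  have "emeasure lborel S = emeasure (density (distr lborel borel (\<lambda>x. p + q * x)) (\<lambda>_. ennreal \<bar>q\<bar>)) S"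
    by (rule arg_cong[where f="\<lambda>M. emeasure M S", OF eq])
  also have "\<dots> = (\<integral>\<^sup>+x. ennreal \<bar>q\<bar> * indicator S x \<partial>distr lborel borel (\<lambda>x. p + q * x))"
    by (subst emeasure_density) auto
  also have "\<dots> = ennreal \<bar>q\<bar> * emeasure (distr lborel borel (\<lambda>x. p + q * x)) S"
    by (subst nn_integral_cmult_indicator) auto
  also have "\<dots> = ennreal \<bar>q\<bar> * emeasure lborel ((\<lambda>x. p + q*x) -` S)"
    by (subst emeasure_distr) auto
  finally show ?thesis .
qed

lemma distr_uniform_affine:
  fixes a b p q :: real
  assumes ab: "a < b" and q: "q \<noteq> 0" and img: "(\<lambda>x. p + q*x) ` {a..b} = {0..1}"
    and len: "\<bar>q\<bar> * (b - a) = 1"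
  shows "distr (uniform_measure lborel {a..b}) U01 (\<lambda>x. p + q*x) = U01"
proof (rule measure_eqI)
  fix B assume "B \<in> sets (distr (uniform_measure lborel {a..b}) U01 (\<lambda>x. p + q*x))"
  then have B[measurable]: "B \<in> sets borel" by simp
  let ?h = "\<lambda>x. p + q*x"
  have pre: "{a..b} \<inter> ?h -` B = ?h -` ({0..1} \<inter> B)"
  proof (rule set_eqI, rule iffI)
    fix x assume "x \<in> {a..b} \<inter> ?h -` B" then show "x \<in> ?h -` ({0..1} \<inter> B)" using img by blast
  next
    fix x assume x: "x \<in> ?h -` ({0..1} \<inter> B)"
    then have "?h x \<in> ?h ` {a..b}" using img by simp
    then obtain y where "y \<in> {a..b}" "?h y = ?h x" by auto
    then have "x \<in> {a..b}" using q by simp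
    with x show "x \<in> {a..b} \<inter> ?h -` B" by simp
  qed
  have hm: "?h \<in> borel_measurable borel" by measurable
  have hB[measurable]: "?h -` B \<in> sets borel" using measurable_sets[OF hm B] by simp
  have A: "emeasure lborel ({0..1} \<inter> B) = ennreal \<bar>q\<bar> * emeasure lborel (?h -` ({0..1} \<inter> B))"
    by (rule lborel_affine_preimage[OF q]) auto
  have iq: "inverse (ennreal (b - a)) = ennreal \<bar>q\<bar>"
    using ab len by (subst inverse_ennreal) (auto simp: field_simps)
  have "emeasure (distr (uniform_measure lborel {a..b}) U01 ?h) B
      = emeasure (uniform_measure lborel {a..b}) (?h -` B)"
    by (subst emeasure_distr) auto
  also have "\<dots> = emeasure lborel ({a..b} \<inter> ?h -` B) / emeasure lborel {a..b}"
    by (subst emeasure_uniform_measure) auto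
  also have "\<dots> = emeasure lborel (?h -` ({0..1} \<inter> B)) * ennreal \<bar>q\<bar>"
    using ab by (simp add: pre divide_ennreal_def iq)
  also have "\<dots> = emeasure U01 B"
    by (subst emeasure_uniform_measure) (auto simp: A mult.commute divide_ennreal_def)
  finally show "emeasure (distr (uniform_measure lborel {a..b}) U01 ?h) B = emeasure U01 B" .
qed simp


lemma distr_PiM_coordinatewise:
  assumes I: "finite I" and pA: "prob_space A" and pB: "prob_space B"
    and f: "\<And>i. i \<in> I \<Longrightarrow> f i \<in> measurable A B"
    and fd: "\<And>i. i \<in> I \<Longrightarrow> distr A B (f i) = B"
  shows "distr (PiM I (\<lambda>_. A)) (PiM I (\<lambda>_. B)) (\<lambda>x. \<lambda>i\<in>I. f i (x i)) = PiM I (\<lambda>_. B)"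
proof -
  interpret PA: product_prob_space "\<lambda>_. A" by (rule product_prob_spaceI) (rule pA)
  interpret PB: product_prob_space "\<lambda>_. B" by (rule product_prob_spaceI) (rule pB)
  have meas: "(\<lambda>x. \<lambda>i\<in>I. f i (x i)) \<in> measurable (PiM I (\<lambda>_. A)) (PiM I (\<lambda>_. B))"
  proof (rule measurable_restrict)
    fix i assume i: "i \<in> I"
    show "(\<lambda>x. f i (x i)) \<in> measurable (PiM I (\<lambda>_. A)) B"
      by (rule measurable_compose[OF measurable_component_singleton[OF i] f[OF i]])
  qed
  show ?thesis
  proof (rule PB.PiM_eqI[OF I])
    show "sets (distr (PiM I (\<lambda>_. A)) (PiM I (\<lambda>_. B)) (\<lambda>x. \<lambda>i\<in>I. f i (x i))) = sets (PiM I (\<lambda>_. B))"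
      by simp
    fix C assume C: "\<And>i. i \<in> I \<Longrightarrow> C i \<in> sets B"
    have "emeasure (distr (PiM I (\<lambda>_. A)) (PiM I (\<lambda>_. B)) (\<lambda>x. \<lambda>i\<in>I. f i (x i))) (PiE I C)
        = emeasure (PiM I (\<lambda>_. A)) ((\<lambda>x. \<lambda>i\<in>I. f i (x i)) -` PiE I C \<inter> space (PiM I (\<lambda>_. A)))"
      using C I by (intro emeasure_distr meas) (auto intro!: sets_PiM_I_finite)
    also have "(\<lambda>x. \<lambda>i\<in>I. f i (x i)) -` PiE I C \<inter> space (PiM I (\<lambda>_. A)) = PiE I (\<lambda>i. f i -` C i \<inter> space A)"
      by (auto simp: space_PiM PiE_def Pi_def extensional_def)
    also have "emeasure (PiM I (\<lambda>_. A)) (PiE I (\<lambda>i. f i -` C i \<inter> space A)) = (\<Prod>i\<in>I. emeasure A (f i -` C i \<inter> space A))"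
      using C f by (intro PA.emeasure_PiM I) (auto intro: measurable_sets)
    also have "\<dots> = (\<Prod>i\<in>I. emeasure (distr A B (f i)) (C i))"
      using C f by (intro prod.cong refl emeasure_distr[symmetric]) auto
    also have "\<dots> = (\<Prod>i\<in>I. emeasure B (C i))"
      using fd by (intro prod.cong) auto
    finally show "emeasure (distr (PiM I (\<lambda>_. A)) (PiM I (\<lambda>_. B)) (\<lambda>x. \<lambda>i\<in>I. f i (x i))) (PiE I C) = (\<Prod>i\<in>I. emeasure B (C i))" .
  qed
qed

lemma uniform_cube:
  fixes M :: real and n :: nat assumes M: "M > 0"
  shows "uniform_measure (PiM {..<n} (\<lambda>_. lborel)) (PiE {..<n} (\<lambda>_. {-M..M}))
       = PiM {..<n} (\<lambda>_. uniform_measure lborel {-M..M})"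
proof -
  interpret PU: product_prob_space "\<lambda>_. uniform_measure lborel {-M..M}"
    by (rule product_prob_spaceI) (rule prob_space_uniform_measure, use M in auto)
  interpret PL: product_sigma_finite "\<lambda>_. lborel :: real measure" by standard
  have cs[measurable]: "PiE {..<n} (\<lambda>_. {-M..M}) \<in> sets (PiM {..<n} (\<lambda>_. lborel))"
    by (intro sets_PiM_I_finite) auto
  have eI: "emeasure lborel {-M..M} = ennreal (2*M)"
    using M by (subst emeasure_lborel_Icc) auto
  have eC: "emeasure (PiM {..<n} (\<lambda>_. lborel)) (PiE {..<n} (\<lambda>_. {-M..M})) = ennreal ((2*M)^n)"
  proof -
    have "emeasure (PiM {..<n} (\<lambda>_. lborel)) (PiE {..<n} (\<lambda>_. {-M..M})) = (\<Prod>i<n. emeasure lborel {-M..M})"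
      by (subst PL.emeasure_PiM) auto
    also have "\<dots> = ennreal (2*M)^n"
      by (simp add: eI)
    also have "\<dots> = ennreal ((2*M)^n)"
      by (rule ennreal_power) (use M in simp)
    finally show ?thesis .
  qed
  have inv: "inverse (ennreal ((2*M)^n)) = ennreal (1/(2*M))^n"
  proof -
    have "inverse (ennreal ((2*M)^n)) = ennreal (inverse ((2*M)^n))"
      by (rule inverse_ennreal) (use M in simp)
    also have "inverse ((2*M)^n) = (1/(2*M))^n"
      by (simp add: inverse_eq_divide power_one_over)
    also have "ennreal ((1/(2*M))^n) = ennreal (1/(2*M))^n"
      by (rule ennreal_power[symmetric]) (use M in simp)
    finally show ?thesis .
  qed
  have inv1: "inverse (ennreal (2*M)) = ennreal (1/(2*M))"
    by (subst inverse_ennreal) (use M in \<open>auto simp: inverse_eq_divide\<close>)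
  show ?thesis
  proof (rule PU.PiM_eqI[OF finite_lessThan])
    show "sets (uniform_measure (PiM {..<n} (\<lambda>_. lborel)) (PiE {..<n} (\<lambda>_. {-M..M}))) = sets (PiM {..<n} (\<lambda>_. uniform_measure lborel {-M..M}))"
      unfolding sets_uniform_measure by (rule sets_PiM_cong) auto
    fix A assume A: "\<And>i. i \<in> {..<n} \<Longrightarrow> A i \<in> sets (uniform_measure lborel {-M..M})"
    then have A': "\<And>i. i \<in> {..<n} \<Longrightarrow> A i \<in> sets borel" by simp
    have AI: "\<And>i. i < n \<Longrightarrow> {-M..M} \<inter> A i \<in> sets borel" using A' by auto
    have AS: "PiE {..<n} A \<in> sets (PiM {..<n} (\<lambda>_. lborel))"
      using A' by (intro sets_PiM_I_finite) auto
    have int: "PiE {..<n} (\<lambda>_. {-M..M}) \<inter> PiE {..<n} A = PiE {..<n} (\<lambda>i. {-M..M} \<inter> A i)"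
      by (auto simp: PiE_def Pi_def)
    have "emeasure (uniform_measure (PiM {..<n} (\<lambda>_. lborel)) (PiE {..<n} (\<lambda>_. {-M..M}))) (PiE {..<n} A)
        = emeasure (PiM {..<n} (\<lambda>_. lborel)) (PiE {..<n} (\<lambda>i. {-M..M} \<inter> A i)) / ennreal ((2*M)^n)"
      by (subst emeasure_uniform_measure[OF cs AS]) (simp only: int eC)
    also have "\<dots> = (\<Prod>i<n. emeasure lborel ({-M..M} \<inter> A i)) * ennreal (1/(2*M))^n"
      by (subst PL.emeasure_PiM) (use AI in \<open>simp_all only: divide_ennreal_def inv finite_lessThan lessThan_iff sets_lborel\<close>)
    also have "\<dots> = (\<Prod>i<n. emeasure lborel ({-M..M} \<inter> A i) * ennreal (1/(2*M)))"
      by (simp add: prod.distrib)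
    also have "\<dots> = (\<Prod>i<n. emeasure (uniform_measure lborel {-M..M}) (A i))"
      using A' by (intro prod.cong refl) (simp add: divide_ennreal_def inv1 eI)
    finally show "emeasure (uniform_measure (PiM {..<n} (\<lambda>_. lborel)) (PiE {..<n} (\<lambda>_. {-M..M}))) (PiE {..<n} A) = (\<Prod>i<n. emeasure (uniform_measure lborel {-M..M}) (A i))" .
  qed
qed

lemma prob_U01: "prob_space U01"
  by (intro prob_space_uniform_measure) auto

definition QN :: "nat \<Rightarrow> (nat \<Rightarrow> real) measure" where
  "QN d = PiM {..<2*d+2} (\<lambda>_. U01)"

lemma prob_QN: "prob_space (QN d)"
  unfolding QN_def by (intro prob_space_PiM prob_U01)
lemma emeasure_cube:
  fixes M :: real and n :: nat assumes M: "M > 0"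
  shows "emeasure (PiM {..<n} (\<lambda>_. lborel)) (PiE {..<n} (\<lambda>_. {-M..M})) = ennreal ((2*M)^n)"
proof -
  interpret PL: product_sigma_finite "\<lambda>_. lborel :: real measure" by standard
  have eI: "emeasure lborel {-M..M} = ennreal (2*M)"
    using M by (subst emeasure_lborel_Icc) auto
  have "emeasure (PiM {..<n} (\<lambda>_. lborel)) (PiE {..<n} (\<lambda>_. {-M..M})) = (\<Prod>i<n. emeasure lborel {-M..M})"
    by (subst PL.emeasure_PiM) auto
  also have "\<dots> = ennreal (2*M)^n"
    by (simp add: eI)
  also have "\<dots> = ennreal ((2*M)^n)"
    by (rule ennreal_power) (use M in simp)
  finally show ?thesis .
qed

lemma sum_split_add: "(\<Sum>i<m+n. f i) = (\<Sum>i<m. f i) + (\<Sum>i<n. f (m+i::nat))"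
  by (induction n) (auto simp: add.assoc)

definition gq :: "nat \<Rightarrow> real \<Rightarrow> nat \<Rightarrow> real" where
  "gq d M i = (if i < d \<or> i = 2*d then - 1/(2*M) else 1/(2*M))"

definition GG :: "nat \<Rightarrow> real \<Rightarrow> (nat \<Rightarrow> real) \<Rightarrow> (nat \<Rightarrow> real)" where
  "GG d M x = (\<lambda>i\<in>{..<2*d+2}. 1/2 + gq d M i * x i)"

lemma distr_GG:
  assumes M: "M > 0"
  shows "distr (uniform_measure (lebesgue_R (2*d+2)) (cube_CM d M)) (QN d) (GG d M) = QN d"
proof -
  have img: "(\<lambda>x. 1/2 + gq d M i * x) ` {-M..M} = {0..1}" for i
  proof -
    have "(\<lambda>x. 1/2 + gq d M i * x) = (\<lambda>x. gq d M i * x + 1/2)" by (auto simp: fun_eq_iff)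
    then show ?thesis using M
      by (simp only: image_affinity_atLeastAtMost) (auto simp: gq_def field_simps)
  qed
  have "distr (uniform_measure (lebesgue_R (2*d+2)) (cube_CM d M)) (QN d) (GG d M)
      = distr (PiM {..<2*d+2} (\<lambda>_. uniform_measure lborel {-M..M})) (PiM {..<2*d+2} (\<lambda>_. U01))
          (\<lambda>x. \<lambda>i\<in>{..<2*d+2}. (\<lambda>t. 1/2 + gq d M i * t) (x i))"
    unfolding lebesgue_R_def cube_CM_def uniform_cube[OF M] QN_def GG_def ..
  also have "\<dots> = QN d"
    unfolding QN_def
  proof (rule distr_PiM_coordinatewise)
    show "prob_space (uniform_measure lborel {-M..M})"
      by (rule prob_space_uniform_measure) (use M in auto)
    fix i
    show "(\<lambda>t. 1/2 + gq d M i * t) \<in> measurable (uniform_measure lborel {-M..M}) U01" by measurable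
    show "distr (uniform_measure lborel {-M..M}) U01 (\<lambda>t. 1/2 + gq d M i * t) = U01"
      by (rule distr_uniform_affine[OF _ _ img]) (use M in \<open>auto simp: gq_def field_simps\<close>)
  qed (auto intro: prob_U01)
  finally show ?thesis .
qed


definition XX :: "nat \<Rightarrow> (nat \<Rightarrow> real) \<Rightarrow> real" where "XX d u = u (2*d) + u (2*d+1)"
definition YY :: "nat \<Rightarrow> (nat \<Rightarrow> real) \<Rightarrow> real" where "YY d u = (\<Sum>i<2*d. u i)"

lemma XX_meas[measurable]: "XX d \<in> borel_measurable (QN d)"
  unfolding XX_def QN_def by measurable
lemma YY_meas[measurable]: "YY d \<in> borel_measurable (QN d)"
  unfolding YY_def QN_def by measurable

definition W1 :: "nat \<Rightarrow> (nat \<Rightarrow> real) set" where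
  "W1 d = {u\<in>space (QN d). XX d u > 1 \<and> YY d u < real d + 1 - XX d u}"
definition W2 :: "nat \<Rightarrow> (nat \<Rightarrow> real) set" where
  "W2 d = {u\<in>space (QN d). XX d u < 1 \<and> YY d u > real d + 1 - XX d u}"

lemma W_sets[measurable]: "W1 d \<in> sets (QN d)" "W2 d \<in> sets (QN d)"
  unfolding W1_def W2_def XX_def YY_def QN_def by measurable

lemma XX_GG: "M > 0 \<Longrightarrow> XX d (GG d M x) = 1 + (alphaH d x - alphaK d x)/(2*M)"
  by (simp add: XX_def GG_def gq_def alphaH_def alphaK_def field_simps)

lemma YY_GG: assumes M: "M > 0" shows "YY d (GG d M x) = real d + (\<Sum>i<d. betaH d x i - betaK d x i)/(2*M)"
proof -
  have "YY d (GG d M x) = (\<Sum>i<d+d. 1/2 + gq d M i * x i)"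
    by (simp add: YY_def GG_def mult_2)
  also have "\<dots> = (\<Sum>i<d. 1/2 + gq d M i * x i) + (\<Sum>i<d. 1/2 + gq d M (d+i) * x (d+i))"
    by (rule sum_split_add)
  also have "\<dots> = (\<Sum>i<d. 1 + (x (d+i) - x i)/(2*M))"
    unfolding sum.distrib[symmetric] by (intro sum.cong refl) (use M in \<open>simp add: gq_def field_simps\<close>)
  also have "\<dots> = real d + (\<Sum>i<d. betaH d x i - betaK d x i)/(2*M)"
    by (simp add: sum.distrib sum_divide_distrib betaH_def betaK_def)
  finally show ?thesis .
qed

lemma U_H_eq: "U_H d x = alphaH d x - alphaK d x"
  by (simp add: U_H_def muK_def)
lemma U_K_eq: "U_K d x = (\<Sum>i<d. betaH d x i - betaK d x i) + (alphaH d x - alphaK d x)"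
  by (simp add: U_K_def muH_def)

lemma sign_equiv:
  fixes a s M :: real and d :: nat assumes M: "M > 0"
  shows "(1 + a/(2*M) > 1 \<and> real d + s/(2*M) < real d + 1 - (1 + a/(2*M))) \<longleftrightarrow> (a > 0 \<and> s + a < 0)"
    and "(1 + a/(2*M) < 1 \<and> real d + s/(2*M) > real d + 1 - (1 + a/(2*M))) \<longleftrightarrow> (a < 0 \<and> s + a > 0)"
proof -
  have e1: "(real d + s/(2*M) < real d + 1 - (1 + a/(2*M))) \<longleftrightarrow> (s+a)/(2*M) < 0"
    by (simp add: add_divide_distrib) linarith
  have e2: "(real d + s/(2*M) > real d + 1 - (1 + a/(2*M))) \<longleftrightarrow> (s+a)/(2*M) > 0"
    by (simp add: add_divide_distrib) linarith
  show "(1 + a/(2*M) > 1 \<and> real d + s/(2*M) < real d + 1 - (1 + a/(2*M))) \<longleftrightarrow> (a > 0 \<and> s + a < 0)"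
    unfolding e1 using M by (simp add: divide_less_0_iff zero_less_divide_iff)
  show "(1 + a/(2*M) < 1 \<and> real d + s/(2*M) > real d + 1 - (1 + a/(2*M))) \<longleftrightarrow> (a < 0 \<and> s + a > 0)"
    unfolding e2 using M by (simp add: divide_less_0_iff zero_less_divide_iff)
qed


lemma GG_meas[measurable]: "GG d M \<in> measurable (lebesgue_R (2*d+2)) (QN d)"
  unfolding GG_def QN_def lebesgue_R_def
proof (rule measurable_restrict)
  fix i :: nat assume i: "i \<in> {..<2*d+2}"
  have "(\<lambda>x. x i) \<in> measurable (PiM {..<2*d+2} (\<lambda>_. lborel)) borel"
    using measurable_component_singleton[OF i, of "\<lambda>_. lborel"] by simp
  then have "(\<lambda>x. 1/2 + gq d M i * x i) \<in> borel_measurable (PiM {..<2*d+2} (\<lambda>_. lborel))"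
    by (intro borel_measurable_add borel_measurable_times borel_measurable_const)
  moreover have "measurable (PiM {..<2*d+2} (\<lambda>_. lborel)) U01 = borel_measurable (PiM {..<2*d+2} (\<lambda>_. lborel))"
    by (rule measurable_cong_sets) auto
  ultimately show "(\<lambda>x. 1/2 + gq d M i * x i) \<in> measurable (PiM {..<2*d+2} (\<lambda>_. lborel)) U01"
    by simp
qed

lemma part1:
  fixes M :: real assumes M: "M > 0"
  shows "measure (lebesgue_R (2 * d + 2)) (opposite_sign_set d M) / measure (lebesgue_R (2 * d + 2)) (cube_CM d M)
       = measure (QN d) (W1 d) + measure (QN d) (W2 d)"
proof -
  let ?L = "lebesgue_R (2*d+2)" and ?C = "cube_CM d M"
  let ?U = "uniform_measure ?L ?C"
  have Cs[measurable]: "?C \<in> sets ?L"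
    unfolding cube_CM_def lebesgue_R_def by (intro sets_PiM_I_finite) auto
  have eC: "emeasure ?L ?C = ennreal ((2*M)^(2*d+2))"
    unfolding cube_CM_def lebesgue_R_def by (rule emeasure_cube[OF M])
  have eC0: "emeasure ?L ?C \<noteq> 0" "emeasure ?L ?C \<noteq> \<infinity>"
    unfolding eC using M by auto
  define P where "P x = ((U_H d x < 0 \<and> U_K d x > 0) \<or> (U_H d x > 0 \<and> U_K d x < 0))" for x
  have comp: "(\<lambda>x. x i) \<in> borel_measurable ?L" if "i < 2*d+2" for i
    using measurable_component_singleton[of i "{..<2*d+2}" "\<lambda>_. lborel"] that by (simp add: lebesgue_R_def)
  have mH[measurable]: "U_H d \<in> borel_measurable ?L"
  proof -
    have "U_H d = (\<lambda>x. x (2*d+1) - x (2*d))" by (auto simp: fun_eq_iff U_H_eq alphaH_def alphaK_def)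
    then show ?thesis by (simp only:) (intro borel_measurable_diff comp; simp)
  qed
  have mK[measurable]: "U_K d \<in> borel_measurable ?L"
  proof -
    have "U_K d = (\<lambda>x. (\<Sum>i<d. x (d+i) - x i) + (x (2*d+1) - x (2*d)))"
      by (auto simp: fun_eq_iff U_K_eq alphaH_def alphaK_def betaH_def betaK_def)
    then show ?thesis by (simp only:) (intro borel_measurable_add borel_measurable_sum borel_measurable_diff comp; simp)
  qed
  have Ps: "{x\<in>space ?L. P x} \<in> sets ?L"
    unfolding P_def by measurable
  have Csub: "?C \<subseteq> space ?L"
    by (rule sets.sets_into_space[OF Cs])
  have opp: "opposite_sign_set d M = ?C \<inter> {x\<in>space ?L. P x}"
    using Csub unfolding opposite_sign_set_def P_def by auto
  have opps: "opposite_sign_set d M \<in> sets ?L"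
    unfolding opp using Cs Ps by auto
  define W where "W = W1 d \<union> W2 d"
  have Ws: "W \<in> sets (QN d)" unfolding W_def by measurable
  have pre: "GG d M -` W \<inter> space ?U \<in> sets ?L"
    using measurable_sets[OF GG_meas Ws] by simp
  have mU: "GG d M \<in> measurable ?U (QN d)"
    unfolding measurable_cong_sets[OF sets_uniform_measure refl] by (rule GG_meas)
  have key: "?C \<inter> opposite_sign_set d M = ?C \<inter> (GG d M -` W \<inter> space ?U)"
  proof (rule set_eqI)
    fix x
    have sp: "GG d M x \<in> space (QN d)"
      by (auto simp: GG_def QN_def space_PiM)
    have f1: "x \<in> opposite_sign_set d M \<longleftrightarrow> x \<in> ?C \<and> P x" unfolding opp using Csub by auto
    define A where "A = alphaH d x - alphaK d x"
    define S where "S = (\<Sum>i<d. betaH d x i - betaK d x i)"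
    have w1: "GG d M x \<in> W1 d \<longleftrightarrow> (A > 0 \<and> S + A < 0)"
      unfolding W1_def mem_Collect_eq XX_GG[OF M] YY_GG[OF M] A_def[symmetric] S_def[symmetric]
      using sp sign_equiv(1)[OF M, of A d S] by blast
    have w2: "GG d M x \<in> W2 d \<longleftrightarrow> (A < 0 \<and> S + A > 0)"
      unfolding W2_def mem_Collect_eq XX_GG[OF M] YY_GG[OF M] A_def[symmetric] S_def[symmetric]
      using sp sign_equiv(2)[OF M, of A d S] by blast
    have "P x \<longleftrightarrow> (A < 0 \<and> S + A > 0) \<or> (A > 0 \<and> S + A < 0)"
      unfolding P_def U_H_eq U_K_eq A_def S_def ..
    then have f2: "P x \<longleftrightarrow> GG d M x \<in> W"
      unfolding W_def Un_iff w1 w2 by blast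
    have f3: "x \<in> ?C \<Longrightarrow> x \<in> space ?U" using Csub by auto
    from f1 f2 f3 show "x \<in> ?C \<inter> opposite_sign_set d M \<longleftrightarrow> x \<in> ?C \<inter> (GG d M -` W \<inter> space ?U)"
      by auto
  qed
  have "measure ?L (opposite_sign_set d M) / measure ?L ?C = measure ?U (opposite_sign_set d M)"
  proof -
    have "?C \<inter> opposite_sign_set d M = opposite_sign_set d M" using opp by auto
    then show ?thesis using measure_uniform_measure[OF eC0 opps] by simp
  qed
  also have "\<dots> = measure ?U (GG d M -` W \<inter> space ?U)"
    using measure_uniform_measure[OF eC0 opps] measure_uniform_measure[OF eC0 pre] key by simp
  also have "\<dots> = measure (distr ?U (QN d) (GG d M)) W"
    by (rule measure_distr[symmetric, OF mU Ws])
  also have "\<dots> = measure (QN d) W"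
    unfolding distr_GG[OF M] ..
  also have "\<dots> = measure (QN d) (W1 d) + measure (QN d) (W2 d)"
  proof -
    interpret prob_space "QN d" unfolding QN_def by (intro prob_space_PiM prob_U01)
    have "W1 d \<inter> W2 d = {}" unfolding W1_def W2_def by auto
    then show ?thesis unfolding W_def by (intro finite_measure_Union) auto
  qed
  finally show ?thesis .
qed

definition TT :: "nat \<Rightarrow> (nat \<Rightarrow> real) \<Rightarrow> real \<times> real" where
  "TT d u = (u (2*d) + u (2*d+1), \<Sum>i<2*d. u i)"

lemma TT_meas[measurable]: "TT d \<in> measurable (QN d) (borel \<Otimes>\<^sub>M borel)"
  unfolding TT_def QN_def by measurable

lemma irwin_pair: "irwin_hall 2 \<Otimes>\<^sub>M irwin_hall (2*d) = distr (QN d) (borel \<Otimes>\<^sub>M borel) (TT d)"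
proof -
  interpret P: product_prob_space "\<lambda>_. U01" by (rule product_prob_spaceI) (rule prob_U01)
  define K where "K = {2*d, 2*d+1}"
  define J where "J = {..<2*d}"
  have KJ: "K \<inter> J = {}" "K \<union> J = {..<2*d+2}" unfolding K_def J_def by auto
  have finKJ: "finite K" "finite J" unfolding K_def J_def by auto
  have re: "distr (PiM K (\<lambda>_. U01)) (PiM {..<2} (\<lambda>i. U01)) (\<lambda>\<omega>. \<lambda>n\<in>{..<2::nat}. \<omega> (2*d+n)) = PiM {..<2} (\<lambda>_. U01)"
    using distr_PiM_reindex[of K "\<lambda>_. U01" "\<lambda>n. 2*d+n" "{..<2}"] prob_U01
    by (auto simp: K_def inj_on_def less_2_cases_iff)
  have I2: "irwin_hall 2 = distr (PiM K (\<lambda>_. U01)) borel (\<lambda>u. u (2*d) + u (2*d+1))"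
  proof -
    have "irwin_hall 2 = distr (distr (PiM K (\<lambda>_. U01)) (PiM {..<2} (\<lambda>i. U01)) (\<lambda>\<omega>. \<lambda>n\<in>{..<2::nat}. \<omega> (2*d+n))) borel (\<lambda>u. \<Sum>i<2. u i)"
      unfolding irwin_hall_def re ..
    also have "\<dots> = distr (PiM K (\<lambda>_. U01)) borel ((\<lambda>u. \<Sum>i<2. u i) \<circ> (\<lambda>\<omega>. \<lambda>n\<in>{..<2::nat}. \<omega> (2*d+n)))"
      by (rule distr_distr) (auto simp: K_def less_2_cases_iff intro!: measurable_restrict measurable_component_singleton)
    also have "\<dots> = distr (PiM K (\<lambda>_. U01)) borel (\<lambda>u. u (2*d) + u (2*d+1))"
      by (rule distr_cong) (auto simp: numeral_2_eq_2 lessThan_Suc)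
    finally show ?thesis .
  qed
  have IJ: "irwin_hall (2*d) = distr (PiM J (\<lambda>_. U01)) borel (\<lambda>u. \<Sum>i<2*d. u i)"
    unfolding irwin_hall_def J_def ..
  have sf: "sigma_finite_measure (distr (PiM J (\<lambda>_. U01)) borel (\<lambda>u. \<Sum>i<2*d. u i))"
  proof -
    interpret prob_space "distr (PiM J (\<lambda>_. U01)) borel (\<lambda>u. \<Sum>i<2*d. u i)"
      by (rule prob_space.prob_space_distr) (auto simp: J_def intro: prob_space_PiM prob_U01)
    show ?thesis by unfold_locales
  qed
  have mm: "merge K J \<in> measurable (PiM K (\<lambda>_. U01) \<Otimes>\<^sub>M PiM J (\<lambda>_. U01)) (QN d)"
    unfolding QN_def KJ(2)[symmetric] by (rule measurable_merge)
  have "irwin_hall 2 \<Otimes>\<^sub>M irwin_hall (2*d) = distr (PiM K (\<lambda>_. U01) \<Otimes>\<^sub>M PiM J (\<lambda>_. U01)) (borel \<Otimes>\<^sub>M borel)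
      (\<lambda>(x, y). (x (2*d) + x (2*d+1), \<Sum>i<2*d. y i))"
    unfolding I2 IJ by (rule pair_measure_distr[OF _ _ sf]) (auto simp: K_def J_def)
  also have "\<dots> = distr (PiM K (\<lambda>_. U01) \<Otimes>\<^sub>M PiM J (\<lambda>_. U01)) (borel \<Otimes>\<^sub>M borel) (TT d \<circ> merge K J)"
    by (rule distr_cong) (auto simp: TT_def K_def J_def space_pair_measure)
  also have "\<dots> = distr (distr (PiM K (\<lambda>_. U01) \<Otimes>\<^sub>M PiM J (\<lambda>_. U01)) (QN d) (merge K J)) (borel \<Otimes>\<^sub>M borel) (TT d)"
    by (rule distr_distr[symmetric, OF TT_meas mm])
  also have "distr (PiM K (\<lambda>_. U01) \<Otimes>\<^sub>M PiM J (\<lambda>_. U01)) (QN d) (merge K J) = QN d"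
    unfolding QN_def KJ(2)[symmetric] by (rule P.distr_merge[OF KJ(1) finKJ])
  finally show ?thesis .
qed


lemma P_d_QN: "P_d d = measure (QN d) (W1 d) + measure (QN d) (W2 d)"
proof -
  have s1: "{p::real\<times>real. fst p > 1 \<and> snd p < real d + 1 - fst p} \<in> sets (borel \<Otimes>\<^sub>M borel)"
  proof -
    have "{p\<in>space (borel \<Otimes>\<^sub>M borel). fst p > 1 \<and> snd p < real d + 1 - fst p} \<in> sets (borel \<Otimes>\<^sub>M borel)"
      by measurable
    then show ?thesis by (simp add: space_pair_measure)
  qed
  have s2: "{p::real\<times>real. fst p < 1 \<and> snd p > real d + 1 - fst p} \<in> sets (borel \<Otimes>\<^sub>M borel)"
  proof -
    have "{p\<in>space (borel \<Otimes>\<^sub>M borel). fst p < 1 \<and> snd p > real d + 1 - fst p} \<in> sets (borel \<Otimes>\<^sub>M borel)"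
      by measurable
    then show ?thesis by (simp add: space_pair_measure)
  qed
  have "measure (irwin_hall 2 \<Otimes>\<^sub>M irwin_hall (2*d)) {p. fst p > 1 \<and> snd p < real d + 1 - fst p}
      = measure (QN d) (TT d -` {p. fst p > 1 \<and> snd p < real d + 1 - fst p} \<inter> space (QN d))"
    unfolding irwin_pair by (rule measure_distr[OF TT_meas s1])
  also have "TT d -` {p. fst p > 1 \<and> snd p < real d + 1 - fst p} \<inter> space (QN d) = W1 d"
    by (auto simp: TT_def W1_def XX_def YY_def)
  finally have e1: "measure (irwin_hall 2 \<Otimes>\<^sub>M irwin_hall (2*d)) {p. fst p > 1 \<and> snd p < real d + 1 - fst p} = measure (QN d) (W1 d)" .
  have "measure (irwin_hall 2 \<Otimes>\<^sub>M irwin_hall (2*d)) {p. fst p < 1 \<and> snd p > real d + 1 - fst p}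
      = measure (QN d) (TT d -` {p. fst p < 1 \<and> snd p > real d + 1 - fst p} \<inter> space (QN d))"
    unfolding irwin_pair by (rule measure_distr[OF TT_meas s2])
  also have "TT d -` {p. fst p < 1 \<and> snd p > real d + 1 - fst p} \<inter> space (QN d) = W2 d"
    by (auto simp: TT_def W2_def XX_def YY_def)
  finally have e2: "measure (irwin_hall 2 \<Otimes>\<^sub>M irwin_hall (2*d)) {p. fst p < 1 \<and> snd p > real d + 1 - fst p} = measure (QN d) (W2 d)" .
  show ?thesis unfolding P_d_def e1 e2 ..
qed
lemma U01_singleton: "emeasure U01 {t} = 0"
proof -
  have "emeasure U01 {t} = emeasure lborel ({0..1} \<inter> {t}) / emeasure lborel {0..1::real}"
    by (rule emeasure_uniform_measure) auto
  also have "emeasure lborel ({0..1} \<inter> {t}) = 0"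
    by (rule emeasure_lborel_countable) (auto intro: countable_finite)
  finally show ?thesis by simp
qed

lemma atom_null:
  fixes f :: "(nat \<Rightarrow> real) \<Rightarrow> real"
  assumes I: "finite I" and k: "k \<in> I"
    and f[measurable]: "f \<in> borel_measurable (PiM I (\<lambda>_. U01))"
    and fk: "\<And>u y. f (u(k:=y)) = f u"
  shows "emeasure (PiM I (\<lambda>_. U01)) {u\<in>space (PiM I (\<lambda>_. U01)). u k + f u = c} = 0"
proof -
  interpret P: product_prob_space "\<lambda>_. U01" by (rule product_prob_spaceI) (rule prob_U01)
  define I' where "I' = I - {k}"
  have II: "I = insert k I'" "k \<notin> I'" "finite I'" using k I unfolding I'_def by auto
  define S where "S = {u\<in>space (PiM I (\<lambda>_. U01)). u k + f u = c}"
  have Ss[measurable]: "S \<in> sets (PiM I (\<lambda>_. U01))"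
    unfolding S_def using k by measurable
  have "emeasure (PiM I (\<lambda>_. U01)) S = (\<integral>\<^sup>+u. indicator S u \<partial>PiM I (\<lambda>_. U01))"
    by (rule nn_integral_indicator[symmetric]) (rule Ss)
  also have "\<dots> = (\<integral>\<^sup>+x. (\<integral>\<^sup>+y. indicator S (x(k:=y)) \<partial>U01) \<partial>PiM I' (\<lambda>_. U01))"
    unfolding II(1) by (rule P.product_nn_integral_insert[OF II(3) II(2)]) (use Ss II in simp)
  also have "\<dots> = (\<integral>\<^sup>+x. 0 \<partial>PiM I' (\<lambda>_. U01))"
  proof (rule nn_integral_cong)
    fix x assume x: "x \<in> space (PiM I' (\<lambda>_. U01))"
    have "(\<integral>\<^sup>+y. indicator S (x(k:=y)) \<partial>U01) = (\<integral>\<^sup>+y. indicator {c - f x} y \<partial>U01)"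
    proof (rule nn_integral_cong)
      fix y
      have "x(k:=y) \<in> space (PiM I (\<lambda>_. U01))"
        using x II by (auto simp: space_PiM PiE_def extensional_def)
      moreover have "f (x(k:=y)) = f x" by (rule fk)
      ultimately show "indicator S (x(k:=y)) = (indicator {c - f x} y :: ennreal)"
        unfolding S_def by (auto simp: indicator_def)
    qed
    also have "\<dots> = 0" by (simp add: U01_singleton)
    finally show "(\<integral>\<^sup>+y. indicator S (x(k:=y)) \<partial>U01) = 0" .
  qed
  finally show ?thesis unfolding S_def by simp
qed

lemma XX_atom: "measure (QN d) {u\<in>space (QN d). XX d u = 1} = 0"
proof -
  have "emeasure (QN d) {u\<in>space (QN d). u (2*d) + (\<lambda>u. u (2*d+1)) u = 1} = 0"
    unfolding QN_def by (rule atom_null) auto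
  then show ?thesis by (simp add: XX_def measure_def)
qed

lemma YY_atom: assumes d: "d \<ge> 1" shows "measure (QN d) {u\<in>space (QN d). YY d u = real d} = 0"
proof -
  have "emeasure (QN d) {u\<in>space (QN d). u 0 + (\<lambda>u. \<Sum>i\<in>{1..<2*d}. u i) u = real d} = 0"
    unfolding QN_def using d by (intro atom_null) auto
  moreover have "(\<Sum>i<2*d. u i) = u 0 + (\<Sum>i\<in>{1..<2*d}. u i)" for u :: "nat \<Rightarrow> real"
  proof -
    have "{..<2*d} = insert 0 {1..<2*d}" using d by auto
    then show ?thesis by simp
  qed
  ultimately show ?thesis by (simp add: YY_def measure_def)
qed

definition RR :: "nat \<Rightarrow> (nat \<Rightarrow> real) \<Rightarrow> (nat \<Rightarrow> real)" where
  "RR d u = (\<lambda>i\<in>{..<2*d+2}. (\<lambda>t. if i = 2*d \<or> i = 2*d+1 then 1 - t else t) (u i))"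

lemma distr_RR: "distr (QN d) (QN d) (RR d) = QN d"
  unfolding QN_def RR_def
proof (rule distr_PiM_coordinatewise)
  fix i
  show "(\<lambda>t. if i = 2*d \<or> i = 2*d+1 then 1 - t else t) \<in> measurable U01 U01"
    by (cases "i = 2*d \<or> i = 2*d+1") (simp_all add: measurable_cong_sets[OF sets_uniform_measure sets_uniform_measure])
  show "distr U01 U01 (\<lambda>t. if i = 2*d \<or> i = 2*d+1 then 1 - t else t) = U01"
  proof (cases "i = 2*d \<or> i = 2*d+1")
    case True
    have "(\<lambda>t::real. if i = 2*d \<or> i = 2*d+1 then 1 - t else t) = (\<lambda>t. 1 + (-1) * t)"
      using True by (auto simp: fun_eq_iff)
    moreover have "distr U01 U01 (\<lambda>t. 1 + (-1) * t) = U01"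
      by (rule distr_uniform_affine) (auto simp: image_iff intro!: bexI[where x="1 - _"])
    ultimately show ?thesis by (simp only:)
  next
    case False then show ?thesis by simp
  qed
qed (auto intro: prob_U01)

lemma XX_RR: "XX d (RR d u) = 2 - XX d u"
  by (simp add: XX_def RR_def)
lemma YY_RR: "YY d (RR d u) = YY d u"
  by (simp add: YY_def RR_def)
lemma RR_space: "RR d u \<in> space (QN d)"
  by (auto simp: RR_def QN_def space_PiM)

lemma measure_RR:
  assumes S: "S \<in> sets (QN d)"
  shows "measure (QN d) S = measure (QN d) (RR d -` S \<inter> space (QN d))"
proof -
  have m: "RR d \<in> measurable (QN d) (QN d)"
    unfolding RR_def QN_def by measurable
  have "measure (QN d) S = measure (distr (QN d) (QN d) (RR d)) S" unfolding distr_RR ..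
  also have "\<dots> = measure (QN d) (RR d -` S \<inter> space (QN d))"
    by (rule measure_distr[OF m S])
  finally show ?thesis .
qed


definition DD :: "nat \<Rightarrow> (nat \<Rightarrow> real) set" where
  "DD d = {u\<in>space (QN d). real d - 1 \<le> YY d u \<and> YY d u \<le> real d + 1}"

lemma XX_range: "AE u in QN d. 0 \<le> XX d u \<and> XX d u \<le> 2"
proof -
  have a: "AE x in U01. x \<in> {0..1}"
    by (rule AE_uniform_measureI) auto
  have "AE u in QN d. u (2*d) \<in> {0..1}"
    unfolding QN_def using AE_PiM_component[of "{..<2*d+2}" "\<lambda>_. U01" "2*d" "\<lambda>x. x \<in> {0..1}"] a prob_U01 by auto
  moreover have "AE u in QN d. u (2*d+1) \<in> {0..1}"
    unfolding QN_def using AE_PiM_component[of "{..<2*d+2}" "\<lambda>_. U01" "2*d+1" "\<lambda>x. x \<in> {0..1}"] a prob_U01 by auto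
  ultimately show ?thesis by eventually_elim (auto simp: XX_def)
qed

lemma XX_out_null:
  "measure (QN d) {u\<in>space (QN d). XX d u > 2} = 0"
  "measure (QN d) {u\<in>space (QN d). XX d u < 0} = 0"
proof -
  have s1: "{u\<in>space (QN d). XX d u > 2} \<in> sets (QN d)" by measurable
  have s0: "{u\<in>space (QN d). XX d u < 0} \<in> sets (QN d)" by measurable
  have a1: "AE u in QN d. XX d u \<le> 2" using XX_range[of d] by eventually_elim auto
  have a0: "AE u in QN d. XX d u \<ge> 0" using XX_range[of d] by eventually_elim auto
  have "emeasure (QN d) {u\<in>space (QN d). XX d u > 2} = 0"
    using AE_iff_measurable[OF s1, of "\<lambda>u. XX d u \<le> 2"] a1 by (auto simp: not_le)
  then show "measure (QN d) {u\<in>space (QN d). XX d u > 2} = 0" by (simp add: measure_def)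
  have "emeasure (QN d) {u\<in>space (QN d). XX d u < 0} = 0"
    using AE_iff_measurable[OF s0, of "\<lambda>u. XX d u \<ge> 0"] a0 by (auto simp: not_le)
  then show "measure (QN d) {u\<in>space (QN d). XX d u < 0} = 0" by (simp add: measure_def)
qed

lemma half_bound:
  assumes d: "d \<ge> 1"
  shows "\<bar>measure (QN d) (W1 d) + measure (QN d) (W2 d) - 1/2\<bar> \<le> 2 * measure (QN d) (DD d)"
proof -
  interpret prob_space "QN d" by (rule prob_QN)
  let ?m = "measure (QN d)" and ?sp = "space (QN d)"
  define F1 where "F1 = {u\<in>?sp. XX d u > 1 \<and> YY d u < real d}"
  define F2 where "F2 = {u\<in>?sp. XX d u < 1 \<and> YY d u > real d}"
  define F3 where "F3 = {u\<in>?sp. XX d u > 1 \<and> YY d u > real d}"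
  define F4 where "F4 = {u\<in>?sp. XX d u < 1 \<and> YY d u < real d}"
  define A1 where "A1 = {u\<in>?sp. XX d u = 1}"
  define A2 where "A2 = {u\<in>?sp. YY d u = real d}"
  define B1 where "B1 = {u\<in>?sp. XX d u > 2}"
  define B0 where "B0 = {u\<in>?sp. XX d u < 0}"
  have sets[measurable]: "F1 \<in> sets (QN d)" "F2 \<in> sets (QN d)" "F3 \<in> sets (QN d)" "F4 \<in> sets (QN d)"
    "A1 \<in> sets (QN d)" "A2 \<in> sets (QN d)" "B1 \<in> sets (QN d)" "B0 \<in> sets (QN d)" "DD d \<in> sets (QN d)"
    unfolding F1_def F2_def F3_def F4_def A1_def A2_def B1_def B0_def DD_def by measurable
  have mA: "?m A1 = 0" "?m A2 = 0" "?m B1 = 0" "?m B0 = 0"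
    unfolding A1_def A2_def B1_def B0_def using XX_atom YY_atom[OF d] XX_out_null by auto
  have "?m F1 = ?m (RR d -` F1 \<inter> ?sp)" by (rule measure_RR) simp
  also have "RR d -` F1 \<inter> ?sp = F4"
    unfolding F1_def F4_def using RR_space[of d] by (auto simp: XX_RR YY_RR)
  finally have e14: "?m F1 = ?m F4" .
  have "?m F2 = ?m (RR d -` F2 \<inter> ?sp)" by (rule measure_RR) simp
  also have "RR d -` F2 \<inter> ?sp = F3"
    unfolding F2_def F3_def using RR_space[of d] by (auto simp: XX_RR YY_RR)
  finally have e23: "?m F2 = ?m F3" .
  have u12: "?m (F1 \<union> F2) = ?m F1 + ?m F2"
    by (rule finite_measure_Union) (auto simp: F1_def F2_def)
  have u123: "?m (F1 \<union> F2 \<union> F3) = ?m F1 + ?m F2 + ?m F3"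
    using u12 by (subst finite_measure_Union) (auto simp: F1_def F2_def F3_def)
  have u1234: "?m (F1 \<union> F2 \<union> F3 \<union> F4) = ?m F1 + ?m F2 + ?m F3 + ?m F4"
    using u123 by (subst finite_measure_Union) (auto simp: F1_def F2_def F3_def F4_def)
  have cover: "?sp \<subseteq> (F1 \<union> F2 \<union> F3 \<union> F4) \<union> A1 \<union> A2"
    unfolding F1_def F2_def F3_def F4_def A1_def A2_def by auto
  have "1 = ?m ?sp" by (simp add: prob_space)
  also have "\<dots> \<le> ?m ((F1 \<union> F2 \<union> F3 \<union> F4) \<union> A1 \<union> A2)"
    by (rule finite_measure_mono[OF cover]) simp
  also have "\<dots> \<le> ?m ((F1 \<union> F2 \<union> F3 \<union> F4) \<union> A1) + ?m A2"
    by (rule measure_subadditive) auto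
  also have "\<dots> \<le> ?m (F1 \<union> F2 \<union> F3 \<union> F4) + ?m A1 + ?m A2"
    using measure_subadditive[of "F1 \<union> F2 \<union> F3 \<union> F4" "QN d" A1] by auto
  finally have ge: "1 \<le> ?m F1 + ?m F2 + ?m F3 + ?m F4" using mA u1234 by simp
  have le: "?m F1 + ?m F2 + ?m F3 + ?m F4 \<le> 1" using u1234 prob_le_1 by metis
  have half: "?m F1 + ?m F2 = 1/2" using ge le e14 e23 by linarith
  have w1: "?m (W1 d) \<le> ?m F1"
    by (rule finite_measure_mono) (auto simp: W1_def F1_def)
  have w2: "?m (W2 d) \<le> ?m F2"
    by (rule finite_measure_mono) (auto simp: W2_def F2_def)
  have "?m F1 \<le> ?m (W1 d \<union> B1 \<union> DD d)"
    by (rule finite_measure_mono) (auto simp: W1_def F1_def B1_def DD_def)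
  also have "\<dots> \<le> ?m (W1 d \<union> B1) + ?m (DD d)"
    by (rule measure_subadditive) auto
  also have "\<dots> \<le> ?m (W1 d) + ?m B1 + ?m (DD d)"
    using measure_subadditive[of "W1 d" "QN d" B1] by auto
  finally have f1: "?m F1 \<le> ?m (W1 d) + ?m (DD d)" using mA by simp
  have "?m F2 \<le> ?m (W2 d \<union> B0 \<union> DD d)"
    by (rule finite_measure_mono) (auto simp: W2_def F2_def B0_def DD_def)
  also have "\<dots> \<le> ?m (W2 d \<union> B0) + ?m (DD d)"
    by (rule measure_subadditive) auto
  also have "\<dots> \<le> ?m (W2 d) + ?m B0 + ?m (DD d)"
    using measure_subadditive[of "W2 d" "QN d" B0] by auto
  finally have f2: "?m F2 \<le> ?m (W2 d) + ?m (DD d)" using mA by simp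
  show ?thesis using half w1 w2 f1 f2 by (simp add: abs_le_iff)
qed

abbreviation Omega :: "(nat \<Rightarrow> real) measure" where "Omega \<equiv> PiM UNIV (\<lambda>_::nat. U01)"

lemma irwin_Omega: "irwin_hall n = distr Omega borel (\<lambda>\<omega>. \<Sum>i<n. \<omega> i)"
proof -
  have re: "distr Omega (PiM {..<n} (\<lambda>_. U01)) (\<lambda>\<omega>. \<lambda>i\<in>{..<n}. \<omega> i) = PiM {..<n} (\<lambda>_. U01)"
    using distr_PiM_reindex[of UNIV "\<lambda>_. U01" "\<lambda>i. i" "{..<n}"] prob_U01 by auto
  have "irwin_hall n = distr (distr Omega (PiM {..<n} (\<lambda>_. U01)) (\<lambda>\<omega>. \<lambda>i\<in>{..<n}. \<omega> i)) borel (\<lambda>u. \<Sum>i<n. u i)"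
    unfolding irwin_hall_def re ..
  also have "\<dots> = distr Omega borel ((\<lambda>u. \<Sum>i<n. u i) \<circ> (\<lambda>\<omega>. \<lambda>i\<in>{..<n}. \<omega> i))"
    by (rule distr_distr) (auto intro!: measurable_restrict)
  also have "\<dots> = distr Omega borel (\<lambda>\<omega>. \<Sum>i<n. \<omega> i)"
    by (rule distr_cong) auto
  finally show ?thesis .
qed

lemma clt_uniform:
  "weak_conv_m (\<lambda>n. distr Omega borel (\<lambda>x. (\<Sum>i<n. x i - 1/2) / sqrt (real n * (sqrt (1/12))\<^sup>2))) std_normal_distribution"
proof -
  interpret P: product_prob_space "\<lambda>_::nat. U01" UNIV
    by (rule product_prob_spaceI) (rule prob_U01)
  have comp: "distr Omega U01 (\<lambda>\<omega>. \<omega> n) = U01" for n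
    by (rule P.PiM_component) simp
  have compb: "distr Omega borel (\<lambda>\<omega>. \<omega> n) = U01" for n
  proof -
    have "distr Omega borel (\<lambda>\<omega>. \<omega> n) = distr Omega U01 (\<lambda>\<omega>. \<omega> n)"
      by (rule distr_cong) auto
    then show ?thesis using comp by simp
  qed
  have dist: "distributed Omega lborel (\<lambda>\<omega>. \<omega> n) (\<lambda>x. indicator {0..1} x / measure lborel {0..1::real})" for n
    unfolding distributed_def
  proof (intro conjI)
    have "distr Omega lborel (\<lambda>\<omega>. \<omega> n) = distr Omega U01 (\<lambda>\<omega>. \<omega> n)"
      by (rule distr_cong) auto
    also have "\<dots> = U01" by (rule comp)
    also have "\<dots> = density lborel (\<lambda>x. ennreal (indicator {0..1} x / measure lborel {0..1::real}))"
      unfolding uniform_measure_def by (intro density_cong) (auto split: split_indicator)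
    finally show "distr Omega lborel (\<lambda>\<omega>. \<omega> n) = density lborel (\<lambda>x. ennreal (indicator {0..1} x / measure lborel {0..1::real}))" .
  qed auto
  have ae: "AE \<omega> in Omega. \<omega> n \<in> {0..1}" for n
    by (rule P.AE_component) (auto intro: AE_uniform_measureI)
  show ?thesis
  proof (rule P.central_limit_theorem[where m="1/2" and \<mu>=U01])
    show "P.indep_vars (\<lambda>i. borel) (\<lambda>n \<omega>. \<omega> n) UNIV"
    proof (subst P.indep_vars_iff_distr_eq_PiM)
      show "distr Omega (PiM UNIV (\<lambda>i. borel)) (\<lambda>x. \<lambda>i\<in>UNIV. x i) = PiM UNIV (\<lambda>i. distr Omega borel (\<lambda>\<omega>. \<omega> i))"
      proof -
        have "distr Omega (PiM UNIV (\<lambda>i. borel)) (\<lambda>x. \<lambda>i\<in>UNIV. x i) = distr Omega Omega (\<lambda>x. x)"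
          by (rule distr_cong) (auto simp: space_PiM intro!: sets_PiM_cong)
        also have "\<dots> = Omega" by simp
        also have "\<dots> = PiM UNIV (\<lambda>i. distr Omega borel (\<lambda>\<omega>. \<omega> i))"
          by (simp add: compb)
        finally show ?thesis .
      qed
    qed auto
    show "P.expectation (\<lambda>\<omega>. \<omega> n) = 1/2" for n
      using P.uniform_distributed_expectation[OF dist] by simp
    show "(0::real) < sqrt (1/12)" by simp
    show "integrable Omega (\<lambda>\<omega>. (\<omega> n)\<^sup>2)" for n
    proof (rule P.integrable_const_bound[where B=1])
      show "AE \<omega> in Omega. norm ((\<omega> n)\<^sup>2) \<le> 1"
        using ae[of n] by eventually_elim (auto simp: power_le_one abs_square_le_1)
    qed auto
    show "P.variance (\<lambda>\<omega>. \<omega> n) = (sqrt (1/12))\<^sup>2" for n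
      using P.uniform_distributed_variance[OF dist] by simp
    show "distr Omega borel (\<lambda>\<omega>. \<omega> n) = U01" for n by (rule compb)
  qed
qed


lemma std_normal_isCont: "isCont (cdf std_normal_distribution) t"
proof -
  have "emeasure std_normal_distribution {t} = (\<integral>\<^sup>+x. ennreal (std_normal_density x) * indicator {t} x \<partial>lborel)"
    by (subst emeasure_density) auto
  also have "\<dots> = 0"
    by (rule nn_integral_null_set) (auto intro: countable_imp_null_set_lborel)
  finally have "emeasure std_normal_distribution {t} = 0" .
  then have "measure std_normal_distribution {t} = 0" by (simp add: measure_def)
  then show ?thesis
    by (subst finite_borel_measure.isCont_cdf[OF real_distribution.finite_borel_measure_M[OF real_dist_normal_dist]])
qed

lemma irwin_conc: "(\<lambda>d. measure (irwin_hall (2*d)) {real d - 1 .. real d + 1}) \<longlonglongrightarrow> 0"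
proof -
  interpret P: product_prob_space "\<lambda>_::nat. U01" UNIV
    by (rule product_prob_spaceI) (rule prob_U01)
  define \<sigma> where "\<sigma> = sqrt (1/12::real)"
  define \<mu> where "\<mu> n = distr Omega borel (\<lambda>x. (\<Sum>i<n. x i - 1/2) / sqrt (real n * \<sigma>\<^sup>2))" for n
  define N where "N = std_normal_distribution"
  have wc: "\<And>t. (\<lambda>n. cdf (\<mu> n) t) \<longlonglongrightarrow> cdf N t"
    using clt_uniform std_normal_isCont unfolding weak_conv_m_def weak_conv_def \<mu>_def N_def \<sigma>_def by blast
  have rd: "real_distribution (\<mu> n)" for n
  proof -
    interpret prob_space "\<mu> n" unfolding \<mu>_def by (rule P.prob_space_distr) simp
    show ?thesis by unfold_locales (simp add: \<mu>_def)
  qed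
  have sq: "\<sigma>\<^sup>2 = 1/12" unfolding \<sigma>_def by simp
  let ?a = "\<lambda>d. measure (irwin_hall (2*d)) {real d - 1 .. real d + 1}"
  have bound: "?a d \<le> cdf (\<mu> (2*d)) e - cdf (\<mu> (2*d)) (-e)" if e: "1 / sqrt (real (2*d) * \<sigma>\<^sup>2) < e" for d e
  proof -
    have e0: "0 < e" using e by (smt (verit) divide_nonneg_nonneg real_sqrt_ge_zero sq mult_nonneg_nonneg of_nat_0_le_iff)
    define c where "c = sqrt (real (2*d) * \<sigma>\<^sup>2)"
    have c0: "c \<ge> 0" unfolding c_def by (simp add: sq)
    have "?a d = measure Omega ((\<lambda>\<omega>. \<Sum>i<2*d. \<omega> i) -` {real d - 1 .. real d + 1} \<inter> space Omega)"
      unfolding irwin_Omega by (rule measure_distr) auto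
    also have "\<dots> \<le> measure Omega ((\<lambda>x. (\<Sum>i<2*d. x i - 1/2) / c) -` {-e<..e} \<inter> space Omega)"
    proof (rule P.finite_measure_mono)
      show "(\<lambda>\<omega>. \<Sum>i<2*d. \<omega> i) -` {real d - 1 .. real d + 1} \<inter> space Omega
          \<subseteq> (\<lambda>x. (\<Sum>i<2*d. x i - 1/2) / c) -` {-e<..e} \<inter> space Omega"
      proof (rule subsetI)
        fix x assume xx: "x \<in> (\<lambda>\<omega>. \<Sum>i<2*d. \<omega> i) -` {real d - 1 .. real d + 1} \<inter> space Omega"
        then have x: "(\<Sum>i<2*d. x i) \<in> {real d - 1 .. real d + 1}" and xs: "x \<in> space Omega" by auto
        have s: "(\<Sum>i<2*d. x i - 1/2) = (\<Sum>i<2*d. x i) - real d"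
          by (simp add: sum_subtractf)
        have ab: "\<bar>\<Sum>i<2*d. x i - 1/2\<bar> \<le> 1" using x unfolding s by auto
        have "\<bar>(\<Sum>i<2*d. x i - 1/2) / c\<bar> < e"
        proof (cases "c = 0")
          case True then show ?thesis using e0 by simp
        next
          case False
          then have cp: "c > 0" using c0 by simp
          have "\<bar>(\<Sum>i<2*d. x i - 1/2) / c\<bar> = \<bar>\<Sum>i<2*d. x i - 1/2\<bar> / c" using cp by (simp add: abs_divide)
          also have "\<dots> \<le> 1 / c" using ab cp by (simp add: divide_right_mono)
          also have "\<dots> < e" using e unfolding c_def .
          finally show ?thesis .
        qed
        then have "-e < (\<Sum>i<2*d. x i - 1/2) / c \<and> (\<Sum>i<2*d. x i - 1/2) / c < e" unfolding abs_less_iff by linarith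
        then show "x \<in> (\<lambda>x. (\<Sum>i<2*d. x i - 1/2) / c) -` {-e<..e} \<inter> space Omega" using xs by auto
      qed
    qed measurable
    also have "\<dots> = measure (\<mu> (2*d)) {-e<..e}"
      unfolding \<mu>_def c_def by (rule measure_distr[symmetric]) auto
    also have "\<dots> = cdf (\<mu> (2*d)) e - cdf (\<mu> (2*d)) (-e)"
      using real_distribution.finite_borel_measure_M[OF rd] e0
      by (subst finite_borel_measure.cdf_diff_eq) auto
    finally show ?thesis .
  qed
  show ?thesis
  proof (rule order_tendstoI)
    fix y :: real assume "y < 0"
    then show "eventually (\<lambda>d. y < ?a d) sequentially" by (simp add: measure_nonneg less_le_trans)
  next
    fix y :: real assume y: "0 < y"
    have c0: "isCont (cdf N) 0" unfolding N_def by (rule std_normal_isCont)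
    have inv0: "(\<lambda>k. 1 / (real k + 1)) \<longlonglongrightarrow> 0"
    proof -
      have "(\<lambda>k. 1 / (real k + 1)) = (\<lambda>n. inverse (real (Suc n)))" by (auto simp: fun_eq_iff inverse_eq_divide)
      then show ?thesis using LIMSEQ_inverse_real_of_nat by simp
    qed
    have t1: "(\<lambda>k. cdf N (1 / (real k + 1))) \<longlonglongrightarrow> cdf N 0"
      by (rule isCont_tendsto_compose[OF c0]) (use inv0 in simp)
    have t2: "(\<lambda>k. cdf N (- (1 / (real k + 1)))) \<longlonglongrightarrow> cdf N 0"
      by (rule isCont_tendsto_compose[OF c0]) (use tendsto_minus[OF inv0] in simp)
    have "(\<lambda>k. cdf N (1 / (real k + 1)) - cdf N (- (1 / (real k + 1)))) \<longlonglongrightarrow> 0"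
      using tendsto_diff[OF t1 t2] by simp
    then obtain k where k: "\<bar>cdf N (1 / (real k + 1)) - cdf N (- (1 / (real k + 1)))\<bar> < y/3"
      using y by (auto dest!: LIMSEQ_D[where r="y/3"])
    define e where "e = 1 / (real k + 1)"
    have e0: "e > 0" unfolding e_def by simp
    have ev1: "eventually (\<lambda>n. \<bar>cdf (\<mu> n) e - cdf N e\<bar> < y/3) sequentially"
    proof -
      have "\<forall>r>0. eventually (\<lambda>n. dist (cdf (\<mu> n) e) (cdf N e) < r) sequentially" using wc[of e] by (simp add: tendsto_iff)
      from this[rule_format, of "y/3"] y show ?thesis by (simp add: dist_real_def)
    qed
    have ev2: "eventually (\<lambda>n. \<bar>cdf (\<mu> n) (-e) - cdf N (-e)\<bar> < y/3) sequentially"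
    proof -
      have "\<forall>r>0. eventually (\<lambda>n. dist (cdf (\<mu> n) (-e)) (cdf N (-e)) < r) sequentially" using wc[of "-e"] by (simp add: tendsto_iff)
      from this[rule_format, of "y/3"] y show ?thesis by (simp add: dist_real_def)
    qed
    have ev3: "eventually (\<lambda>n. 1 / sqrt (real n * \<sigma>\<^sup>2) < e) sequentially"
    proof -
      obtain N :: nat where N: "12 / e\<^sup>2 < N" using reals_Archimedean2 by blast
      show ?thesis unfolding eventually_sequentially
      proof (intro exI allI impI)
        fix n assume n: "N \<le> n"
        have "12 / e\<^sup>2 < real n" using N n by (meson less_le_trans of_nat_le_iff)
        then have "1 / e\<^sup>2 < real n * \<sigma>\<^sup>2" using e0 unfolding sq by (simp add: field_simps)
        then have "sqrt (1 / e\<^sup>2) < sqrt (real n * \<sigma>\<^sup>2)" by (rule real_sqrt_less_mono)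
        then have lt: "1 / e < sqrt (real n * \<sigma>\<^sup>2)" using e0 by (simp add: real_sqrt_divide)
        have pos: "0 < sqrt (real n * \<sigma>\<^sup>2)" using lt e0 by (smt (verit) divide_pos_pos)
        show "1 / sqrt (real n * \<sigma>\<^sup>2) < e" using lt pos e0 by (simp add: field_simps)
      qed
    qed
    have ev: "eventually (\<lambda>n. \<bar>cdf (\<mu> n) e - cdf N e\<bar> < y/3 \<and> \<bar>cdf (\<mu> n) (-e) - cdf N (-e)\<bar> < y/3
        \<and> 1 / sqrt (real n * \<sigma>\<^sup>2) < e) sequentially"
      using ev1 ev2 ev3 by eventually_elim auto
    have "filterlim (\<lambda>d::nat. 2*d) sequentially sequentially"
      by (rule filterlim_subseq) (auto simp: strict_mono_def)
    from eventually_compose_filterlim[OF ev this]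
    show "eventually (\<lambda>d. ?a d < y) sequentially"
    proof eventually_elim
      case (elim d)
      then have "?a d \<le> cdf (\<mu> (2*d)) e - cdf (\<mu> (2*d)) (-e)" by (intro bound) auto
      also have "\<dots> < y" using elim k unfolding e_def by linarith
      finally show ?case .
    qed
  qed
qed


lemma DD_irwin: "measure (QN d) (DD d) = measure (irwin_hall (2*d)) {real d - 1 .. real d + 1}"
proof -
  interpret P: product_prob_space "\<lambda>_. U01" "{..<2*d+2}" by (rule product_prob_spaceI) (rule prob_U01)
  have r: "distr (QN d) (PiM {..<2*d} (\<lambda>_. U01)) (\<lambda>f. restrict f {..<2*d}) = PiM {..<2*d} (\<lambda>_. U01)"
    unfolding QN_def by (rule P.distr_restrict[symmetric]) auto
  have "irwin_hall (2*d) = distr (distr (QN d) (PiM {..<2*d} (\<lambda>_. U01)) (\<lambda>f. restrict f {..<2*d})) borel (\<lambda>u. \<Sum>i<2*d. u i)"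
    by (simp only: irwin_hall_def r)
  also have "\<dots> = distr (QN d) borel ((\<lambda>u. \<Sum>i<2*d. u i) \<circ> (\<lambda>f. restrict f {..<2*d}))"
    by (rule distr_distr) (auto simp: QN_def)
  also have "\<dots> = distr (QN d) borel (YY d)"
    by (rule distr_cong) (auto simp: YY_def)
  finally have ir: "irwin_hall (2*d) = distr (QN d) borel (YY d)" .
  have "measure (irwin_hall (2*d)) {real d - 1 .. real d + 1} = measure (QN d) (YY d -` {real d - 1 .. real d + 1} \<inter> space (QN d))"
    unfolding ir by (rule measure_distr) auto
  also have "YY d -` {real d - 1 .. real d + 1} \<inter> space (QN d) = DD d"
    by (auto simp: DD_def)
  finally show ?thesis ..
qed

theorem mainTheorem3:
  shows "(\<forall>(d::nat) (M::real). d \<ge> 1 \<and> M > 0 \<longrightarrow>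
            measure (lebesgue_R (2 * d + 2)) (opposite_sign_set d M)
              / measure (lebesgue_R (2 * d + 2)) (cube_CM d M) = P_d d)
         \<and> (P_d \<longlonglongrightarrow> 1 / 2)"
proof
  show "\<forall>(d::nat) (M::real). d \<ge> 1 \<and> M > 0 \<longrightarrow>
            measure (lebesgue_R (2 * d + 2)) (opposite_sign_set d M)
              / measure (lebesgue_R (2 * d + 2)) (cube_CM d M) = P_d d"
    using part1 P_d_QN by auto
  have a: "(\<lambda>d. 2 * measure (irwin_hall (2*d)) {real d - 1 .. real d + 1}) \<longlonglongrightarrow> 0"
    using tendsto_mult_right_zero[OF irwin_conc, of 2] by simp
  have ev: "eventually (\<lambda>d. norm (P_d d - 1/2) \<le> 2 * measure (irwin_hall (2*d)) {real d - 1 .. real d + 1}) sequentially"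
    using eventually_ge_at_top[of "1::nat"]
  proof eventually_elim
    case (elim d)
    show ?case using half_bound[OF elim] unfolding P_d_QN[symmetric] DD_irwin by simp
  qed
  have "(\<lambda>d. P_d d - 1/2) \<longlonglongrightarrow> 0"
    by (rule Lim_null_comparison[OF ev a])
  then show "P_d \<longlonglongrightarrow> 1 / 2"
    by (simp add: LIM_zero_iff)
qed

end
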